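(* Let $\varepsilon\in(0,1/2)$ and $\Delta\ge1$. Let $H=(V,E_H)$ be a multigraph with spanning forest $F_H$ (a maximal acyclic subset of $E_H$), let $e=(a,b)\notin E_H$ be an edge whose endpoints lie in the same tree of $F_H$, and suppose the endpoints of the edges of $(E_H\cup\{e\})\setminus F_H$ are distinct vertices any two of which are at distance at least $\Delta$ in $F_H$. Let $X\in\{0,1\}^V$ be uniform, $Z\in\{0,1\}^{E_H\cup\{e\}}$ have independent Bernoulli$(\varepsilon)$ entries independent of $X$, and $Y(f)=X(u)+X(v)+Z(f)\pmod 2$ for $f=(u,v)$. Let $r=|E_H\setminus F_H|$ and $\rho=(1-2\varepsilon)^\Delta$, and suppose $(1+\rho)^r<2$. Then for every $y\in\{0,1\}^{E_H}$ with $\Pr[Y|_{E_H}=y]>0$, $$\left|\Pr[Y(e)=0\mid Y|_{E_H}=y]-\tfrac12\right|\le\frac{(1-2\varepsilon)^{\Delta-1}(1+\rho)^{r}}{2-(1+\rho)^{r}}.$$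
   Context: Distances in $F_H$ are shortest-path distances in the forest $F_H$. *)

theory Defs
  imports Complex_Main "HOL-Library.Extended_Nat" "HOL-Library.FuncSet"
begin

text \<open>A multigraph is given by a vertex set V, an edge index set E, and an endpoint
  map ep assigning to each edge index its (unordered) pair of endpoints.\<close>

definition connects :: "('e \<Rightarrow> 'v \<times> 'v) \<Rightarrow> 'e \<Rightarrow> 'v \<Rightarrow> 'v \<Rightarrow> bool" where
  "connects ep f u v \<longleftrightarrow> ep f = (u, v) \<or> ep f = (v, u)"

definition ends :: "('e \<Rightarrow> 'v \<times> 'v) \<Rightarrow> 'e \<Rightarrow> 'v set" where
  "ends ep f = {fst (ep f), snd (ep f)}"

text \<open>Loops (length 1) and pairs of parallel edges (length 2) are cycles.\<close>
definition is_cycle :: "('e \<Rightarrow> 'v \<times> 'v) \<Rightarrow> 'e set \<Rightarrow> 'e list \<Rightarrow> 'v list \<Rightarrow> bool" where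
  "is_cycle ep F es vs \<longleftrightarrow> es \<noteq> [] \<and> length vs = Suc (length es) \<and> distinct es \<and>
     set es \<subseteq> F \<and> hd vs = last vs \<and> distinct (butlast vs) \<and>
     (\<forall>i < length es. connects ep (es ! i) (vs ! i) (vs ! Suc i))"

definition acyclic_edges :: "('e \<Rightarrow> 'v \<times> 'v) \<Rightarrow> 'e set \<Rightarrow> bool" where
  "acyclic_edges ep F \<longleftrightarrow> \<not> (\<exists>es vs. is_cycle ep F es vs)"

definition spanning_forest :: "('e \<Rightarrow> 'v \<times> 'v) \<Rightarrow> 'e set \<Rightarrow> 'e set \<Rightarrow> bool" where
  "spanning_forest ep E F \<longleftrightarrow> F \<subseteq> E \<and> acyclic_edges ep F \<and>
     (\<forall>f \<in> E - F. \<not> acyclic_edges ep (insert f F))"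

text \<open>Walks in F (as vertex sequences) and shortest-path distance in F
  (infinity if u and v are in different components).\<close>
definition walk_in :: "('e \<Rightarrow> 'v \<times> 'v) \<Rightarrow> 'e set \<Rightarrow> 'v list \<Rightarrow> bool" where
  "walk_in ep F vs \<longleftrightarrow> vs \<noteq> [] \<and>
     (\<forall>i. Suc i < length vs \<longrightarrow> (\<exists>f \<in> F. connects ep f (vs ! i) (vs ! Suc i)))"

definition fdist :: "('e \<Rightarrow> 'v \<times> 'v) \<Rightarrow> 'e set \<Rightarrow> 'v \<Rightarrow> 'v \<Rightarrow> enat" where
  "fdist ep F u v = (INF vs \<in> {vs. walk_in ep F vs \<and> hd vs = u \<and> last vs = v}.
                        enat (length vs - 1))"

text \<open>The probability space: X uniform on {0,1}^V, Z i.i.d. Bernoulli(eps) on the edge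
  set EE (bits encoded as bool, 0 = False), independent.  Finite sample space.\<close>
definition sample_space :: "'v set \<Rightarrow> 'e set \<Rightarrow> (('v \<Rightarrow> bool) \<times> ('e \<Rightarrow> bool)) set" where
  "sample_space V EE = (V \<rightarrow>\<^sub>E (UNIV :: bool set)) \<times> (EE \<rightarrow>\<^sub>E (UNIV :: bool set))"

definition weight :: "real \<Rightarrow> 'v set \<Rightarrow> 'e set \<Rightarrow> ('v \<Rightarrow> bool) \<times> ('e \<Rightarrow> bool) \<Rightarrow> real" where
  "weight eps V EE \<omega> = (1/2) ^ card V *
     (\<Prod>f \<in> EE. if snd \<omega> f then eps else 1 - eps)"

definition Pr :: "real \<Rightarrow> 'v set \<Rightarrow> 'e set \<Rightarrow>
    (('v \<Rightarrow> bool) \<times> ('e \<Rightarrow> bool) \<Rightarrow> bool) \<Rightarrow> real" where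
  "Pr eps V EE A = (\<Sum>\<omega> \<in> {\<omega> \<in> sample_space V EE. A \<omega>}. weight eps V EE \<omega>)"

definition cond_Pr :: "real \<Rightarrow> 'v set \<Rightarrow> 'e set \<Rightarrow>
    (('v \<Rightarrow> bool) \<times> ('e \<Rightarrow> bool) \<Rightarrow> bool) \<Rightarrow>
    (('v \<Rightarrow> bool) \<times> ('e \<Rightarrow> bool) \<Rightarrow> bool) \<Rightarrow> real" where
  "cond_Pr eps V EE A B = Pr eps V EE (\<lambda>\<omega>. A \<omega> \<and> B \<omega>) / Pr eps V EE B"

definition Yv :: "('e \<Rightarrow> 'v \<times> 'v) \<Rightarrow> ('v \<Rightarrow> bool) \<times> ('e \<Rightarrow> bool) \<Rightarrow> 'e \<Rightarrow> bool" where
  "Yv ep \<omega> f = ((fst \<omega> (fst (ep f)) \<noteq> fst \<omega> (snd (ep f))) \<noteq> snd \<omega> f)"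

end

theory Submission
  imports Defs
begin


definition deg :: "('e \<Rightarrow> 'v \<times> 'v) \<Rightarrow> 'e set \<Rightarrow> 'v \<Rightarrow> nat" where
  "deg ep R w = card {f\<in>R. fst (ep f) = w} + card {f\<in>R. snd (ep f) = w}"

lemma deg_Un:
  assumes "finite A" "finite B" "A \<inter> B = {}"
  shows "deg ep (A \<union> B) w = deg ep A w + deg ep B w"
proof -
  have 1: "{f\<in>A\<union>B. fst (ep f) = w} = {f\<in>A. fst (ep f) = w} \<union> {f\<in>B. fst (ep f) = w}" by auto
  have 2: "{f\<in>A\<union>B. snd (ep f) = w} = {f\<in>A. snd (ep f) = w} \<union> {f\<in>B. snd (ep f) = w}" by auto
  show ?thesis unfolding deg_def 1 2
    by (subst card_Un_disjoint, use assms in auto)+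
qed

lemma deg_single: "deg ep {g} w = (if fst (ep g) = w then 1 else 0) + (if snd (ep g) = w then 1 else 0)"
proof -
  have "{f\<in>{g}. fst (ep f) = w} = (if fst (ep g) = w then {g} else {})"
       "{f\<in>{g}. snd (ep f) = w} = (if snd (ep g) = w then {g} else {})" by auto
  then show ?thesis unfolding deg_def by simp
qed

lemma deg_remove:
  assumes "finite R" "g \<in> R"
  shows "deg ep R x = deg ep (R - {g}) x + (if fst (ep g) = x then 1 else 0) + (if snd (ep g) = x then 1 else 0)"
proof -
  have "R = (R - {g}) \<union> {g}" using assms by auto
  then have "deg ep R x = deg ep ((R - {g}) \<union> {g}) x" by simp
  also have "\<dots> = deg ep (R - {g}) x + deg ep {g} x" using assms by (intro deg_Un) auto
  finally show ?thesis by (simp add: deg_single)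
qed

lemma deg_remove_parity:
  assumes "finite R" "g \<in> R" "connects ep g u v" "u \<noteq> v"
  shows "odd (deg ep (R - {g}) x) = (odd (deg ep R x) \<noteq> (x = u \<or> x = v))"
proof -
  have d: "deg ep R x = deg ep (R - {g}) x + (if fst (ep g) = x then 1 else 0) + (if snd (ep g) = x then 1 else 0)"
    using deg_remove[OF assms(1,2)] .
  from assms(3) consider "ep g = (u, v)" | "ep g = (v, u)" unfolding connects_def by blast
  then show ?thesis
  proof cases
    case 1 then show ?thesis using d assms(4) by (cases "x = u"; cases "x = v") auto
  next
    case 2 then show ?thesis using d assms(4) by (cases "x = u"; cases "x = v") auto
  qed
qed

fun wk :: "('e \<Rightarrow> 'v \<times> 'v) \<Rightarrow> 'e set \<Rightarrow> 'v list \<Rightarrow> bool" where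
  "wk ep R [] = False"
| "wk ep R [v] = True"
| "wk ep R (v # w # vs) = ((\<exists>f\<in>R. connects ep f v w) \<and> wk ep R (w # vs))"

lemma wk_mono: "wk ep R vs \<Longrightarrow> R \<subseteq> R' \<Longrightarrow> wk ep R' vs"
  by (induction ep R vs rule: wk.induct) auto

lemma wk_walk: "wk ep R vs \<Longrightarrow> walk_in ep R vs"
proof (induction ep R vs rule: wk.induct)
  case (1 ep R) then show ?case by simp
next
  case (2 ep R v) then show ?case by (simp add: walk_in_def)
next
  case (3 ep R v w vs)
  then have h: "\<exists>f\<in>R. connects ep f v w" and w: "walk_in ep R (w # vs)" by auto
  show ?case unfolding walk_in_def
  proof (intro conjI allI impI)
    fix i assume "Suc i < length (v # w # vs)"
    then show "\<exists>f\<in>R. connects ep f ((v # w # vs) ! i) ((v # w # vs) ! Suc i)"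
      using h w unfolding walk_in_def by (cases i) auto
  qed simp
qed

lemma wk_suffix: "wk ep R (p @ q) \<Longrightarrow> q \<noteq> [] \<Longrightarrow> wk ep R q"
proof (induction p)
  case Nil then show ?case by simp
next
  case (Cons a p)
  then show ?case by (cases "p @ q") auto
qed

lemma wk_hd: "wk ep R vs \<Longrightarrow> vs \<noteq> []" by (cases vs) auto

lemma wk_shortcut: "wk ep R vs \<Longrightarrow> \<exists>ps. wk ep R ps \<and> hd ps = hd vs \<and> last ps = last vs \<and> distinct ps"
proof (induction ep R vs rule: wk.induct)
  case (1 ep R) then show ?case by simp
next
  case (2 ep R v) then show ?case by (intro exI[of _ "[v]"]) simp
next
  case (3 ep R v w vs)
  then obtain ps where ps: "wk ep R ps" "hd ps = w" "last ps = last (w # vs)" "distinct ps" by auto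
  from 3 obtain f where f: "f \<in> R" "connects ep f v w" by auto
  have ne: "ps \<noteq> []" using ps(1) by (cases ps) auto
  show ?case
  proof (cases "v \<in> set ps")
    case True
    then obtain p q where pq: "ps = p @ v # q" by (meson split_list)
    have "wk ep R (v # q)" using wk_suffix[of ep R p "v # q"] ps(1) pq by simp
    moreover have "last (v # q) = last (v # w # vs)" using ps(3) pq by simp
    moreover have "distinct (v # q)" using ps(4) pq by simp
    ultimately show ?thesis by (intro exI[of _ "v # q"]) simp
  next
    case False
    obtain ps' where ps': "ps = w # ps'" using ne ps(2) by (cases ps) auto
    have "wk ep R (v # ps)" using ps ps' f by auto
    then show ?thesis using ps ne False by (intro exI[of _ "v # ps"]) auto
  qed
qed

lemma wk_edges: "wk ep R ps \<Longrightarrow> distinct ps \<Longrightarrow> \<exists>es. length ps = Suc (length es) \<and> distinct es \<and> set es \<subseteq> R \<and>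
   (\<forall>i<length es. connects ep (es ! i) (ps ! i) (ps ! Suc i))"
proof (induction ep R ps rule: wk.induct)
  case (1 ep R) then show ?case by simp
next
  case (2 ep R v) then show ?case by (intro exI[of _ "[]"]) simp
next
  case (3 ep R v w vs)
  then obtain es where es: "length (w # vs) = Suc (length es)" "distinct es" "set es \<subseteq> R"
     "\<forall>i<length es. connects ep (es ! i) ((w # vs) ! i) ((w # vs) ! Suc i)" by auto
  from 3 obtain f where f: "f \<in> R" "connects ep f v w" by auto
  have fn: "f \<notin> set es"
  proof
    assume "f \<in> set es"
    then obtain i where i: "i < length es" "es ! i = f" by (meson in_set_conv_nth)
    have c: "connects ep f ((w # vs) ! i) ((w # vs) ! Suc i)" using es(4) i by auto
    have "(w # vs) ! i \<in> set (w # vs)" "(w # vs) ! Suc i \<in> set (w # vs)"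
      using i es(1) by (intro nth_mem; simp)+
    moreover have "v \<notin> set (w # vs)" using 3(3) by simp
    ultimately show False using c f(2) unfolding connects_def by auto
  qed
  show ?case
  proof (intro exI[of _ "f # es"] conjI allI impI)
    fix i assume "i < length (f # es)"
    then show "connects ep ((f # es) ! i) ((v # w # vs) ! i) ((v # w # vs) ! Suc i)"
      using es(4) f by (cases i) auto
  qed (use es f fn in auto)
qed

lemma odd_deg_nonloop:
  assumes "finite R" "odd (deg ep R u)"
  shows "\<exists>g\<in>R. \<exists>v. v \<noteq> u \<and> connects ep g u v"
proof (rule ccontr)
  assume "\<not> ?thesis"
  then have h: "\<And>g. g \<in> R \<Longrightarrow> fst (ep g) = u \<or> snd (ep g) = u \<Longrightarrow> fst (ep g) = u \<and> snd (ep g) = u"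
    unfolding connects_def by (metis prod.collapse)
  have "{f\<in>R. fst (ep f) = u} = {f\<in>R. snd (ep f) = u}" using h by blast
  then have "deg ep R u = 2 * card {f\<in>R. snd (ep f) = u}" unfolding deg_def by simp
  then show False using assms(2) by simp
qed

lemma trail:
  assumes "finite R" "odd (deg ep R u)"
  shows "\<exists>w vs R'. w \<noteq> u \<and> odd (deg ep R w) \<and> wk ep R vs \<and> hd vs = u \<and> last vs = w \<and>
     R' \<subseteq> R \<and> card R' + 1 = length vs \<and>
     (\<forall>x. odd (deg ep (R - R') x) = (odd (deg ep R x) \<noteq> (x = u \<or> x = w)))"
  using assms
proof (induction "card R" arbitrary: R u rule: less_induct)
  case less
  obtain g v where g: "g \<in> R" "v \<noteq> u" "connects ep g u v"
    using odd_deg_nonloop[OF less(2,3)] by blast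
  have par: "\<And>x. odd (deg ep (R - {g}) x) = (odd (deg ep R x) \<noteq> (x = u \<or> x = v))"
    using deg_remove_parity[OF less(2) g(1) g(3)] g(2) by blast
  show ?case
  proof (cases "odd (deg ep R v)")
    case True
    show ?thesis
      apply (rule exI[of _ v], rule exI[of _ "[u, v]"], rule exI[of _ "{g}"])
      using True g par by auto
  next
    case False
    have lt: "card (R - {g}) < card R" using card_Diff1_less[OF less(2) g(1)] .
    have ov: "odd (deg ep (R - {g}) v)" using par[of v] False by simp
    obtain w vs R1 where IH: "w \<noteq> v" "odd (deg ep (R - {g}) w)" "wk ep (R - {g}) vs" "hd vs = v"
      "last vs = w" "R1 \<subseteq> R - {g}" "card R1 + 1 = length vs"
      "\<forall>x. odd (deg ep (R - {g} - R1) x) = (odd (deg ep (R - {g}) x) \<noteq> (x = v \<or> x = w))"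
      using less(1)[OF lt _ ov] less(2) by blast
    have wu: "w \<noteq> u" using IH(1,2) par[of w] less(3) by auto
    have ow: "odd (deg ep R w)" using IH(1,2) par[of w] wu by auto
    have ne: "vs \<noteq> []" using IH(3) by (cases vs) auto
    then obtain vs' where vs': "vs = v # vs'" using IH(4) by (cases vs) auto
    have wk: "wk ep R (u # vs)" using wk_mono[OF IH(3)] g vs' by auto
    have fin1: "finite R1" using IH(6) less(2) finite_subset by blast
    have gn: "g \<notin> R1" using IH(6) by auto
    have eq: "R - insert g R1 = R - {g} - R1" by auto
    show ?thesis
      apply (rule exI[of _ w], rule exI[of _ "u # vs"], rule exI[of _ "insert g R1"])
      using wu ow wk IH ne g(1) fin1 gn par g(2) unfolding eq by auto
  qed
qed

lemma fdist_walk: "wk ep R vs \<Longrightarrow> R \<subseteq> F \<Longrightarrow> fdist ep F (hd vs) (last vs) \<le> enat (length vs - 1)"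
  unfolding fdist_def by (rule INF_lower) (use wk_walk wk_mono in blast)


lemma odd_set_finite: "finite R \<Longrightarrow> finite {w. odd (deg ep R w)}"
proof -
  assume "finite R"
  have "{w. odd (deg ep R w)} \<subseteq> (\<lambda>f. fst (ep f)) ` R \<union> (\<lambda>f. snd (ep f)) ` R"
  proof
    fix w assume "w \<in> {w. odd (deg ep R w)}"
    then have "odd (deg ep R w)" by simp
    then have "deg ep R w \<noteq> 0" by (intro notI) simp
    then show "w \<in> (\<lambda>f. fst (ep f)) ` R \<union> (\<lambda>f. snd (ep f)) ` R" unfolding deg_def
      by (metis (mono_tags, lifting) Collect_empty_eq UnCI add_is_0 card.empty image_eqI mem_Collect_eq)
  qed
  then show ?thesis using \<open>finite R\<close> finite_subset by blast
qed

lemma pairing: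
  assumes "finite R" "R \<subseteq> F"
    "\<forall>u w. odd (deg ep R u) \<longrightarrow> odd (deg ep R w) \<longrightarrow> u \<noteq> w \<longrightarrow> enat \<Delta> \<le> fdist ep F u w"
  shows "\<Delta> * card {w. odd (deg ep R w)} \<le> 2 * card R"
  using assms
proof (induction "card R" arbitrary: R rule: less_induct)
  case less
  show ?case
  proof (cases "{w. odd (deg ep R w)} = {}")
    case True then show ?thesis by simp
  next
    case False
    then obtain u where u: "odd (deg ep R u)" by auto
    obtain w vs R' where T: "w \<noteq> u" "odd (deg ep R w)" "wk ep R vs" "hd vs = u" "last vs = w"
      "R' \<subseteq> R" "card R' + 1 = length vs"
      "\<forall>x. odd (deg ep (R - R') x) = (odd (deg ep R x) \<noteq> (x = u \<or> x = w))"
      using trail[OF less(2) u] by blast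
    have "fdist ep F u w \<le> enat (length vs - 1)" using fdist_walk[OF T(3) less(3)] T(4,5) by simp
    moreover have "enat \<Delta> \<le> fdist ep F u w" using less(4) u T(1,2) by auto
    ultimately have D: "\<Delta> \<le> card R'" using T(7) by (metis add_diff_cancel_right' enat_ord_simps(1) order_trans)
    have finR': "finite R'" using T(6) less(2) finite_subset by blast
    have cR: "card (R - R') = card R - card R'" using T(6) finR' by (simp add: card_Diff_subset)
    have cR'le: "card R' \<le> card R" using T(6) less(2) card_mono by blast
    have hdl: "hd vs \<noteq> last vs" using T by simp
    have "length vs \<ge> 2"
    proof (cases vs)
      case Nil then show ?thesis using T(3) by simp
    next
      case (Cons a l) then show ?thesis using hdl by (cases l) auto
    qed
    then have pos: "card R' \<ge> 1" using T(7) by simp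
    have lt: "card (R - R') < card R" using cR pos cR'le by linarith
    have O2: "{x. odd (deg ep (R - R') x)} = {x. odd (deg ep R x)} - {u, w}"
    proof (rule set_eqI)
      fix x show "x \<in> {x. odd (deg ep (R - R') x)} \<longleftrightarrow> x \<in> {x. odd (deg ep R x)} - {u, w}"
        using T(8)[rule_format, of x] u T(2) by auto
    qed
    have finO: "finite {x. odd (deg ep R x)}" using odd_set_finite[OF less(2)] .
    have cO: "card {x. odd (deg ep (R - R') x)} = card {x. odd (deg ep R x)} - 2"
      unfolding O2 using finO u T(1,2) by (subst card_Diff_subset) auto
    have cO2: "card {x. odd (deg ep R x)} \<ge> 2"
    proof -
      have "{u, w} \<subseteq> {x. odd (deg ep R x)}" using u T(2) by auto
      then have "card {u, w} \<le> card {x. odd (deg ep R x)}" using finO card_mono by blast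
      then show ?thesis using T(1) by simp
    qed
    have IH: "\<Delta> * card {x. odd (deg ep (R - R') x)} \<le> 2 * card (R - R')"
    proof (rule less(1)[OF lt])
      show "finite (R - R')" using less(2) by simp
      show "R - R' \<subseteq> F" using less(3) by auto
      show "\<forall>u w. odd (deg ep (R - R') u) \<longrightarrow> odd (deg ep (R - R') w) \<longrightarrow> u \<noteq> w \<longrightarrow> enat \<Delta> \<le> fdist ep F u w"
        using O2 less(4) by blast
    qed
    define o2 where "o2 = card {x. odd (deg ep R x)}"
    have "\<Delta> * (o2 - 2) \<le> 2 * (card R - card R')" using IH cO cR o2_def by simp
    then have "\<Delta> * o2 - \<Delta> * 2 \<le> 2 * card R - 2 * card R'" by (simp add: diff_mult_distrib2)
    moreover have "\<Delta> * o2 \<ge> \<Delta> * 2" using cO2 o2_def by simp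
    ultimately have "\<Delta> * o2 \<le> 2 * card R" using D cR'le by linarith
    then show ?thesis using o2_def by simp
  qed
qed


lemma cycle_exists:
  assumes "finite W" "W \<subseteq> F" "W \<noteq> {}" "\<forall>x. even (deg ep W x)"
  shows "\<exists>es vs. is_cycle ep F es vs"
proof -
  obtain g where g: "g \<in> W" using assms(3) by auto
  show ?thesis
  proof (cases "fst (ep g) = snd (ep g)")
    case True
    show ?thesis
      apply (rule exI[of _ "[g]"], rule exI[of _ "[fst (ep g), fst (ep g)]"])
      using True g assms(2) unfolding is_cycle_def connects_def by (auto simp: prod_eq_iff)
  next
    case False
    define u where "u = fst (ep g)"
    define v where "v = snd (ep g)"
    have c: "connects ep g u v" unfolding connects_def u_def v_def by simp
    have uv: "u \<noteq> v" using False u_def v_def by simp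
    have par: "\<And>x. odd (deg ep (W - {g}) x) = (x = u \<or> x = v)"
      using deg_remove_parity[OF assms(1) g c uv] assms(4) by simp
    obtain w vs R' where T: "w \<noteq> v" "odd (deg ep (W - {g}) w)" "wk ep (W - {g}) vs" "hd vs = v" "last vs = w"
      using trail[of "W - {g}" ep v] assms(1) par by blast
    have wu: "w = u" using T(1,2) par by auto
    obtain ps where ps: "wk ep (W - {g}) ps" "hd ps = v" "last ps = u" "distinct ps"
      using wk_shortcut[OF T(3)] T(4,5) wu by auto
    obtain es where es: "length ps = Suc (length es)" "distinct es" "set es \<subseteq> W - {g}"
       "\<forall>i<length es. connects ep (es ! i) (ps ! i) (ps ! Suc i)"
      using wk_edges[OF ps(1,4)] by blast
    have ne: "ps \<noteq> []" using es(1) by auto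
    have bl: "ps = butlast ps @ [u]" using ne ps(3) by (metis append_butlast_last_id)
    have ub: "u \<notin> set (butlast ps)" "distinct (butlast ps)" using ps(4) bl
      by (metis distinct_append not_distinct_conv_prefix)+
    have "is_cycle ep F (g # es) (u # ps)"
      unfolding is_cycle_def
    proof (intro conjI allI impI)
      fix i assume i: "i < length (g # es)"
      show "connects ep ((g # es) ! i) ((u # ps) ! i) ((u # ps) ! Suc i)"
      proof (cases i)
        case 0 then show ?thesis using c ps(2) ne by (simp add: hd_conv_nth)
      next
        case (Suc j) then show ?thesis using es(4) i by simp
      qed
    qed (use es g assms(2) ne ps ub in \<open>auto simp: last_conv_nth\<close>)
    then show ?thesis by blast
  qed
qed



definition pb :: "real \<Rightarrow> bool \<Rightarrow> real" where "pb eps c = (if c then eps else 1 - eps)"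
definition sg :: "bool \<Rightarrow> real" where "sg c = (if c then -1 else 1)"
definition cc :: "('e \<Rightarrow> 'v \<times> 'v) \<Rightarrow> ('e \<Rightarrow> bool) \<Rightarrow> ('v \<Rightarrow> bool) \<Rightarrow> 'e \<Rightarrow> bool" where
  "cc ep yy x f = ((x (fst (ep f)) \<noteq> x (snd (ep f))) \<noteq> yy f)"

lemma sum_bool: "(\<Sum>b\<in>(UNIV::bool set). h b) = h True + (h False :: real)"
  by (simp add: UNIV_bool)

lemma sum_PiE_bool:
  assumes "finite I"
  shows "(\<Sum>x\<in>I \<rightarrow>\<^sub>E (UNIV::bool set). \<Prod>i\<in>I. g i (x i)) = (\<Prod>i\<in>I. g i True + (g i False :: real))"
  using prod_sum_PiE[OF assms, of "\<lambda>_. UNIV" g] by (simp add: sum_bool)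

lemma step1:
  assumes finV: "finite V" and finE: "finite EE" and G: "G \<subseteq> EE"
  shows "Pr eps V EE (\<lambda>\<omega>. \<forall>f\<in>G. Yv ep \<omega> f = yy f) =
     (1/2) ^ card V * (\<Sum>x\<in>V \<rightarrow>\<^sub>E UNIV. \<Prod>f\<in>G. pb eps (cc ep yy x f))"
proof -
  let ?A = "V \<rightarrow>\<^sub>E (UNIV::bool set)" and ?B = "EE \<rightarrow>\<^sub>E (UNIV::bool set)"
  have fA: "finite ?A" using finV by (simp add: finite_PiE)
  have fB: "finite ?B" using finE by (simp add: finite_PiE)
  have "Pr eps V EE (\<lambda>\<omega>. \<forall>f\<in>G. Yv ep \<omega> f = yy f) =
     (\<Sum>\<omega>\<in>?A \<times> ?B. if (\<forall>f\<in>G. Yv ep \<omega> f = yy f) then weight eps V EE \<omega> else 0)"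
    unfolding Pr_def sample_space_def using fA fB by (simp add: sum.inter_filter)
  also have "\<dots> = (\<Sum>x\<in>?A. \<Sum>z\<in>?B. if (\<forall>f\<in>G. Yv ep (x,z) f = yy f) then weight eps V EE (x,z) else 0)"
    by (simp add: sum.cartesian_product)
  also have "\<dots> = (\<Sum>x\<in>?A. (1/2) ^ card V * (\<Prod>f\<in>G. pb eps (cc ep yy x f)))"
  proof (rule sum.cong[OF refl])
    fix x assume x: "x \<in> ?A"
    let ?q = "\<lambda>f b. pb eps b * (if f \<in> G \<and> b \<noteq> cc ep yy x f then 0 else 1)"
    have "(\<Sum>z\<in>?B. if (\<forall>f\<in>G. Yv ep (x,z) f = yy f) then weight eps V EE (x,z) else 0)
        = (\<Sum>z\<in>?B. (1/2) ^ card V * (\<Prod>f\<in>EE. ?q f (z f)))"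
    proof (rule sum.cong[OF refl])
      fix z assume z: "z \<in> ?B"
      show "(if (\<forall>f\<in>G. Yv ep (x,z) f = yy f) then weight eps V EE (x,z) else 0) =
            (1/2) ^ card V * (\<Prod>f\<in>EE. ?q f (z f))"
      proof (cases "\<forall>f\<in>G. Yv ep (x,z) f = yy f")
        case True
        then have "\<And>f. f \<in> EE \<Longrightarrow> ?q f (z f) = pb eps (z f)"
          unfolding Yv_def cc_def by auto
        then have "(\<Prod>f\<in>EE. ?q f (z f)) = (\<Prod>f\<in>EE. pb eps (z f))"
          by (intro prod.cong) auto
        then show ?thesis using True unfolding weight_def pb_def by simp
      next
        case False
        then obtain f where f: "f \<in> G" "Yv ep (x,z) f \<noteq> yy f" by auto
        then have "?q f (z f) = 0" unfolding Yv_def cc_def by auto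
        then have "(\<Prod>f\<in>EE. ?q f (z f)) = 0" using f(1) G finE
          apply (intro prod_zero[OF finE])
          apply (rule bexI[of _ f])
          using f(1) G by auto
        then show ?thesis using False by (subst if_not_P) auto
      qed
    qed
    also have "\<dots> = (1/2) ^ card V * (\<Sum>z\<in>?B. \<Prod>f\<in>EE. ?q f (z f))"
      by (simp only: sum_distrib_left)
    also have "\<dots> = (1/2) ^ card V * (\<Prod>f\<in>EE. ?q f True + ?q f False)"
      by (rule arg_cong[where f="\<lambda>t. (1/2) ^ card V * t"], rule sum_PiE_bool[OF finE])
    also have "(\<Prod>f\<in>EE. ?q f True + ?q f False) = (\<Prod>f\<in>EE. if f \<in> G then pb eps (cc ep yy x f) else 1)"
      by (rule prod.cong[OF refl]) (auto simp: pb_def)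
    also have "\<dots> = (\<Prod>f\<in>G. pb eps (cc ep yy x f))"
      using G finE by (simp add: prod.If_cases Int_absorb1)
    finally show "(\<Sum>z\<in>?B. if (\<forall>f\<in>G. Yv ep (x,z) f = yy f) then weight eps V EE (x,z) else 0)
        = (1/2) ^ card V * (\<Prod>f\<in>G. pb eps (cc ep yy x f))" .
  qed
  also have "\<dots> = (1/2) ^ card V * (\<Sum>x\<in>?A. \<Prod>f\<in>G. pb eps (cc ep yy x f))"
    by (simp add: sum_distrib_left)
  finally show ?thesis .
qed

definition evS :: "('e \<Rightarrow> 'v \<times> 'v) \<Rightarrow> 'v set \<Rightarrow> 'e set \<Rightarrow> bool" where
  "evS ep V S = (\<forall>w\<in>V. even (deg ep S w))"

definition KK :: "real \<Rightarrow> ('e \<Rightarrow> 'v \<times> 'v) \<Rightarrow> 'v set \<Rightarrow> 'e set \<Rightarrow> ('e \<Rightarrow> bool) \<Rightarrow> real" where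
  "KK eps ep V G yy = (\<Sum>S\<in>{S\<in>Pow G. evS ep V S}. (1 - 2*eps) ^ card S * (\<Prod>f\<in>S. sg (yy f)))"

lemma pb_cc: "pb eps (cc ep yy x f) =
   (1/2) * ((1 - 2*eps) * (sg (yy f) * sg (x (fst (ep f))) * sg (x (snd (ep f)))) + 1)"
  unfolding pb_def cc_def sg_def by (cases "yy f"; cases "x (fst (ep f))"; cases "x (snd (ep f))") auto

lemma prod_expand:
  assumes "finite G"
  shows "(\<Prod>f\<in>G. pb eps (cc ep yy x f)) = (1/2) ^ card G *
     (\<Sum>S\<in>Pow G. (1 - 2*eps) ^ card S * (\<Prod>f\<in>S. sg (yy f) * sg (x (fst (ep f))) * sg (x (snd (ep f)))))"
proof -
  let ?s = "\<lambda>f. sg (yy f) * sg (x (fst (ep f))) * sg (x (snd (ep f)))"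
  have "(\<Prod>f\<in>G. pb eps (cc ep yy x f)) = (\<Prod>f\<in>G. (1/2) * ((1 - 2*eps) * ?s f + 1))"
    by (simp only: pb_cc)
  also have "\<dots> = (1/2) ^ card G * (\<Prod>f\<in>G. (1 - 2*eps) * ?s f + 1)"
    by (simp only: prod.distrib prod_constant)
  also have "(\<Prod>f\<in>G. (1 - 2*eps) * ?s f + 1) = (\<Sum>S\<in>Pow G. (\<Prod>f\<in>S. (1 - 2*eps) * ?s f) * (\<Prod>f\<in>G-S. 1))"
    by (rule prod_add[OF assms])
  also have "\<dots> = (\<Sum>S\<in>Pow G. (1 - 2*eps) ^ card S * (\<Prod>f\<in>S. ?s f))"
    by (rule sum.cong[OF refl]) (simp add: prod.distrib)
  finally show ?thesis .
qed

lemma prod_group_pow: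
  assumes "finite S" "finite V" "\<forall>f\<in>S. h f \<in> V"
  shows "(\<Prod>f\<in>S. g (h f)) = (\<Prod>w\<in>V. (g w :: real) ^ card {f\<in>S. h f = w})"
proof -
  have hS: "h ` S \<subseteq> V" using assms(3) by auto
  have "(\<Prod>f\<in>S. g (h f)) = (\<Prod>w\<in>V. \<Prod>f\<in>{f. f \<in> S \<and> h f = w}. g (h f))"
    by (rule prod.group[OF assms(1,2) hS, symmetric])
  also have "\<dots> = (\<Prod>w\<in>V. g w ^ card {f\<in>S. h f = w})"
  proof (rule prod.cong[OF refl])
    fix w assume "w \<in> V"
    have "(\<Prod>f\<in>{f. f \<in> S \<and> h f = w}. g (h f)) = (\<Prod>f\<in>{f. f \<in> S \<and> h f = w}. g w)"
      by (rule prod.cong) auto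
    then show "(\<Prod>f\<in>{f. f \<in> S \<and> h f = w}. g (h f)) = g w ^ card {f\<in>S. h f = w}" by simp
  qed
  finally show ?thesis .
qed

lemma chi:
  assumes "finite S" "finite V" "\<forall>f\<in>S. fst (ep f) \<in> V \<and> snd (ep f) \<in> V"
  shows "(\<Prod>f\<in>S. sg (yy f) * sg (x (fst (ep f))) * sg (x (snd (ep f)))) =
    (\<Prod>f\<in>S. sg (yy f)) * (\<Prod>w\<in>V. sg (x w) ^ deg ep S w)"
proof -
  have 1: "(\<Prod>f\<in>S. sg (x (fst (ep f)))) = (\<Prod>w\<in>V. sg (x w) ^ card {f\<in>S. fst (ep f) = w})"
    using prod_group_pow[OF assms(1,2), of "\<lambda>f. fst (ep f)" "\<lambda>w. sg (x w)"] assms(3) by auto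
  have 2: "(\<Prod>f\<in>S. sg (x (snd (ep f)))) = (\<Prod>w\<in>V. sg (x w) ^ card {f\<in>S. snd (ep f) = w})"
    using prod_group_pow[OF assms(1,2), of "\<lambda>f. snd (ep f)" "\<lambda>w. sg (x w)"] assms(3) by auto
  have "(\<Prod>f\<in>S. sg (yy f) * sg (x (fst (ep f))) * sg (x (snd (ep f)))) =
     (\<Prod>f\<in>S. sg (yy f)) * ((\<Prod>f\<in>S. sg (x (fst (ep f)))) * (\<Prod>f\<in>S. sg (x (snd (ep f)))))"
    by (simp add: prod.distrib mult.assoc)
  also have "(\<Prod>f\<in>S. sg (x (fst (ep f)))) * (\<Prod>f\<in>S. sg (x (snd (ep f)))) = (\<Prod>w\<in>V. sg (x w) ^ deg ep S w)"
    unfolding 1 2 deg_def by (simp add: prod.distrib[symmetric] power_add)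
  finally show ?thesis .
qed

lemma charsum:
  assumes "finite V"
  shows "(\<Sum>x\<in>V \<rightarrow>\<^sub>E UNIV. \<Prod>w\<in>V. sg (x w) ^ d w) = (if \<forall>w\<in>V. even (d w) then 2 ^ card V else 0)"
proof -
  have "(\<Sum>x\<in>V \<rightarrow>\<^sub>E UNIV. \<Prod>w\<in>V. sg (x w) ^ d w) = (\<Prod>w\<in>V. sg True ^ d w + sg False ^ d w)"
    by (rule sum_PiE_bool[OF assms])
  also have "\<dots> = (\<Prod>w\<in>V. if even (d w) then 2 else 0)"
    by (rule prod.cong[OF refl]) (simp add: sg_def)
  also have "\<dots> = (if \<forall>w\<in>V. even (d w) then 2 ^ card V else 0)"
    using assms by (auto simp: prod_zero)
  finally show ?thesis .
qed

lemma step2: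
  assumes finV: "finite V" and finG: "finite G" and ends: "\<forall>f\<in>G. fst (ep f) \<in> V \<and> snd (ep f) \<in> V"
  shows "(\<Sum>x\<in>V \<rightarrow>\<^sub>E UNIV. \<Prod>f\<in>G. pb eps (cc ep yy x f)) = (1/2) ^ card G * 2 ^ card V * KK eps ep V G yy"
proof -
  let ?A = "V \<rightarrow>\<^sub>E (UNIV::bool set)"
  have "(\<Sum>x\<in>?A. \<Prod>f\<in>G. pb eps (cc ep yy x f)) =
     (\<Sum>x\<in>?A. (1/2) ^ card G * (\<Sum>S\<in>Pow G. (1 - 2*eps) ^ card S * ((\<Prod>f\<in>S. sg (yy f)) * (\<Prod>w\<in>V. sg (x w) ^ deg ep S w))))"
  proof (rule sum.cong[OF refl])
    fix x assume "x \<in> ?A"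
    show "(\<Prod>f\<in>G. pb eps (cc ep yy x f)) = (1/2) ^ card G * (\<Sum>S\<in>Pow G. (1 - 2*eps) ^ card S * ((\<Prod>f\<in>S. sg (yy f)) * (\<Prod>w\<in>V. sg (x w) ^ deg ep S w)))"
      unfolding prod_expand[OF finG]
      apply (rule arg_cong[where f="\<lambda>t. (1/2) ^ card G * t"])
      apply (rule sum.cong[OF refl])
      apply (subst chi[OF _ finV])
      using finG ends finite_subset by auto
  qed
  also have "\<dots> = (1/2) ^ card G * (\<Sum>S\<in>Pow G. (1 - 2*eps) ^ card S * (\<Prod>f\<in>S. sg (yy f)) * (\<Sum>x\<in>?A. \<Prod>w\<in>V. sg (x w) ^ deg ep S w))"
    by (simp add: sum_distrib_left sum_distrib_right mult.assoc sum.swap[of _ ?A])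
  also have "\<dots> = (1/2) ^ card G * (\<Sum>S\<in>Pow G. (1 - 2*eps) ^ card S * (\<Prod>f\<in>S. sg (yy f)) * (if evS ep V S then 2 ^ card V else 0))"
    unfolding charsum[OF finV] evS_def by simp
  also have "\<dots> = (1/2) ^ card G * 2 ^ card V * KK eps ep V G yy"
    unfolding KK_def using finG
    by (simp add: sum.inter_filter[symmetric] sum_distrib_left sum_distrib_right mult_ac if_distrib cong: if_cong)
  finally show ?thesis .
qed



lemma Pr_formula:
  assumes finV: "finite V" and finE: "finite EE" and G: "G \<subseteq> EE"
    and ends: "\<forall>f\<in>G. fst (ep f) \<in> V \<and> snd (ep f) \<in> V"
  shows "Pr eps V EE (\<lambda>\<omega>. \<forall>f\<in>G. Yv ep \<omega> f = yy f) = (1/2) ^ card G * KK eps ep V G yy"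
proof -
  have finG: "finite G" using G finE finite_subset by blast
  have "Pr eps V EE (\<lambda>\<omega>. \<forall>f\<in>G. Yv ep \<omega> f = yy f) = (1/2) ^ card V * ((1/2) ^ card G * 2 ^ card V * KK eps ep V G yy)"
    unfolding step1[OF finV finE G] step2[OF finV finG ends] ..
  also have "\<dots> = (1/2) ^ card G * KK eps ep V G yy"
    by (simp add: power_one_over)
  finally show ?thesis .
qed

lemma sum_pow_card:
  assumes "finite B"
  shows "(\<Sum>T\<in>Pow B. (\<rho>::real) ^ card T) = (1 + \<rho>) ^ card B"
proof -
  have "(\<Prod>x\<in>B. \<rho> + 1) = (\<Sum>X\<in>Pow B. (\<Prod>x\<in>X. \<rho>) * (\<Prod>x\<in>B - X. 1))"
    by (rule prod_add[OF assms])
  then show ?thesis by (simp add: add.commute)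
qed

lemma sum_pow_card_ins:
  assumes "finite A" "e \<notin> A"
  shows "(\<Sum>T\<in>{T\<in>Pow (insert e A). e \<in> T}. (\<rho>::real) ^ card T) = \<rho> * (1 + \<rho>) ^ card A"
proof -
  have eq: "{T\<in>Pow (insert e A). e \<in> T} = insert e ` Pow A"
  proof (rule set_eqI)
    fix T show "T \<in> {T\<in>Pow (insert e A). e \<in> T} \<longleftrightarrow> T \<in> insert e ` Pow A"
    proof
      assume "T \<in> {T\<in>Pow (insert e A). e \<in> T}"
      then have "T = insert e (T - {e})" "T - {e} \<in> Pow A" by auto
      then show "T \<in> insert e ` Pow A" by blast
    qed auto
  qed
  have inj: "inj_on (insert e) (Pow A)" using assms(2) unfolding inj_on_def
    by (metis Pow_iff insert_ident subsetD)
  have "(\<Sum>T\<in>{T\<in>Pow (insert e A). e \<in> T}. \<rho> ^ card T) = (\<Sum>X\<in>Pow A. \<rho> ^ card (insert e X))"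
    unfolding eq by (rule sum.reindex[OF inj, unfolded comp_def])
  also have "\<dots> = (\<Sum>X\<in>Pow A. \<rho> * \<rho> ^ card X)"
  proof (rule sum.cong[OF refl])
    fix X assume "X \<in> Pow A"
    then have "finite X" "e \<notin> X" using assms finite_subset by auto
    then show "\<rho> ^ card (insert e X) = \<rho> * \<rho> ^ card X" by simp
  qed
  also have "\<dots> = \<rho> * (1 + \<rho>) ^ card A" by (simp add: sum_distrib_left[symmetric] sum_pow_card[OF assms(1)])
  finally show ?thesis .
qed

lemma abs_prod_sg: "\<bar>\<Prod>f\<in>S. sg (yy f)\<bar> = 1"
  unfolding abs_prod by (rule prod.neutral) (simp add: sg_def)

lemma evS_all:
  assumes "evS ep V S" "\<forall>f\<in>S. fst (ep f) \<in> V \<and> snd (ep f) \<in> V"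
  shows "even (deg ep S w)"
proof (cases "w \<in> V")
  case True then show ?thesis using assms(1) unfolding evS_def by auto
next
  case False
  then have "{f\<in>S. fst (ep f) = w} = {}" "{f\<in>S. snd (ep f) = w} = {}" using assms(2) by auto
  then have "deg ep S w = 0" unfolding deg_def by (simp only: card.empty)
  then show ?thesis by simp
qed

lemma card_bound:
  assumes finEE: "finite EE" and SE: "S \<subseteq> EE" and ev: "\<forall>w. even (deg ep S w)"
    and dist: "\<forall>f\<in>EE - F. fst (ep f) \<noteq> snd (ep f)"
    and disj: "\<forall>f\<in>EE - F. \<forall>g\<in>EE - F. f \<noteq> g \<longrightarrow> ends ep f \<inter> ends ep g = {}"
    and far: "\<forall>u \<in> (\<Union>f \<in> EE - F. ends ep f). \<forall>w \<in> (\<Union>f \<in> EE - F. ends ep f).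
                 u \<noteq> w \<longrightarrow> fdist ep F u w \<ge> enat \<Delta>"
  shows "\<Delta> * card (S - F) \<le> card S"
proof -
  define R where "R = S \<inter> F"
  define T where "T = S - F"
  define Ob where "Ob = (\<Union>f\<in>T. ends ep f)"
  have finS: "finite S" using SE finEE finite_subset by blast
  have finR: "finite R" "finite T" using finS unfolding R_def T_def by auto
  have SRT: "S = R \<union> T" "R \<inter> T = {}" unfolding R_def T_def by auto
  have TE: "T \<subseteq> EE - F" using SE unfolding T_def by auto
  have degS: "\<And>w. deg ep S w = deg ep R w + deg ep T w"
    using deg_Un[OF finR SRT(2)] SRT(1) by simp
  have degT: "\<And>w. deg ep T w = (if w \<in> Ob then 1 else 0)"
  proof -
    fix w
    show "deg ep T w = (if w \<in> Ob then 1 else 0)"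
    proof (cases "w \<in> Ob")
      case True
      then obtain f0 where f0: "f0 \<in> T" "w \<in> ends ep f0" unfolding Ob_def by auto
      have uniq: "\<And>f. f \<in> T \<Longrightarrow> w \<in> ends ep f \<Longrightarrow> f = f0"
      proof (rule ccontr)
        fix f assume f: "f \<in> T" "w \<in> ends ep f" "f \<noteq> f0"
        have "f \<in> EE - F" "f0 \<in> EE - F" using f(1) f0(1) TE by auto
        then have "ends ep f \<inter> ends ep f0 = {}" using disj f(3) by blast
        then show False using f(2) f0(2) by blast
      qed
      have a: "{f\<in>T. fst (ep f) = w} = (if fst (ep f0) = w then {f0} else {})"
      proof (rule set_eqI)
        fix f show "f \<in> {f\<in>T. fst (ep f) = w} \<longleftrightarrow> f \<in> (if fst (ep f0) = w then {f0} else {})"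
          using uniq[of f] f0(1) unfolding ends_def by (cases "fst (ep f0) = w") auto
      qed
      have b: "{f\<in>T. snd (ep f) = w} = (if snd (ep f0) = w then {f0} else {})"
      proof (rule set_eqI)
        fix f show "f \<in> {f\<in>T. snd (ep f) = w} \<longleftrightarrow> f \<in> (if snd (ep f0) = w then {f0} else {})"
          using uniq[of f] f0(1) unfolding ends_def by (cases "snd (ep f0) = w") auto
      qed
      have "fst (ep f0) \<noteq> snd (ep f0)" using dist f0(1) TE by auto
      then show ?thesis using True f0(2) unfolding deg_def a b ends_def by auto
    next
      case False
      then have "{f\<in>T. fst (ep f) = w} = {}" "{f\<in>T. snd (ep f) = w} = {}"
        unfolding Ob_def ends_def by auto
      then have "deg ep T w = 0" unfolding deg_def by (simp only: card.empty)
      then show ?thesis using False by simp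
    qed
  qed
  have Oeq: "{w. odd (deg ep R w)} = Ob"
  proof (rule set_eqI)
    fix w
    have "even (deg ep S w)" using ev by blast
    then have "even (deg ep R w + deg ep T w)" using degS[of w] by simp
    then show "w \<in> {w. odd (deg ep R w)} \<longleftrightarrow> w \<in> Ob" using degT[of w] by (auto split: if_splits)
  qed
  have "\<Delta> * card {w. odd (deg ep R w)} \<le> 2 * card R"
  proof (rule pairing[OF finR(1)])
    show "R \<subseteq> F" unfolding R_def by auto
    show "\<forall>u w. odd (deg ep R u) \<longrightarrow> odd (deg ep R w) \<longrightarrow> u \<noteq> w \<longrightarrow> enat \<Delta> \<le> fdist ep F u w"
    proof (intro allI impI)
      fix u w assume "odd (deg ep R u)" "odd (deg ep R w)" "u \<noteq> w"
      then have "u \<in> Ob" "w \<in> Ob" using Oeq by auto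
      then have "u \<in> (\<Union>f \<in> EE - F. ends ep f)" "w \<in> (\<Union>f \<in> EE - F. ends ep f)"
        unfolding Ob_def using TE by auto
      then show "enat \<Delta> \<le> fdist ep F u w" using far \<open>u \<noteq> w\<close> by blast
    qed
  qed
  moreover have "card Ob = 2 * card T"
  proof -
    have "card Ob = (\<Sum>f\<in>T. card (ends ep f))"
      unfolding Ob_def
    proof (rule card_UN_disjoint[OF finR(2)])
      show "\<forall>f\<in>T. finite (ends ep f)" unfolding ends_def by simp
      show "\<forall>f\<in>T. \<forall>g\<in>T. f \<noteq> g \<longrightarrow> ends ep f \<inter> ends ep g = {}"
      proof (intro ballI impI)
        fix f g assume "f \<in> T" "g \<in> T" "f \<noteq> g"
        then show "ends ep f \<inter> ends ep g = {}" using disj TE by blast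
      qed
    qed
    also have "\<dots> = (\<Sum>f\<in>T. 2)"
      apply (rule sum.cong[OF refl])
      using dist TE unfolding ends_def by auto
    finally show ?thesis by simp
  qed
  ultimately have "\<Delta> * card T \<le> card R" unfolding Oeq by simp
  moreover have "card R \<le> card S" using finS unfolding R_def by (simp add: card_mono)
  ultimately show ?thesis unfolding T_def by simp
qed

lemma inj_minusF:
  assumes finEE: "finite EE" and acyc: "acyclic_edges ep F"
    and S: "S1 \<subseteq> EE" "S2 \<subseteq> EE" and ev: "\<forall>w. even (deg ep S1 w)" "\<forall>w. even (deg ep S2 w)"
    and eq: "S1 - F = S2 - F"
  shows "S1 = S2"
proof (rule ccontr)
  assume ne: "S1 \<noteq> S2"
  define W where "W = (S1 - S2) \<union> (S2 - S1)"
  have fin: "finite S1" "finite S2" using S finEE finite_subset by auto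
  have finW: "finite W" using fin unfolding W_def by auto
  have WF: "W \<subseteq> F" using eq unfolding W_def by blast
  have Wne: "W \<noteq> {}" using ne unfolding W_def by auto
  have evW: "\<forall>w. even (deg ep W w)"
  proof
    fix w
    have u1: "(S1 \<inter> S2) \<union> (S1 - S2) = S1" by auto
    have u2: "(S1 \<inter> S2) \<union> (S2 - S1) = S2" by auto
    have d1: "deg ep S1 w = deg ep (S1 \<inter> S2) w + deg ep (S1 - S2) w"
      using deg_Un[of "S1 \<inter> S2" "S1 - S2" ep w] fin unfolding u1 by auto
    have d2: "deg ep S2 w = deg ep (S1 \<inter> S2) w + deg ep (S2 - S1) w"
      using deg_Un[of "S1 \<inter> S2" "S2 - S1" ep w] fin unfolding u2 by auto
    have d3: "deg ep W w = deg ep (S1 - S2) w + deg ep (S2 - S1) w"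
      unfolding W_def using fin by (intro deg_Un) auto
    show "even (deg ep W w)" using ev d1 d2 d3 by (metis even_add)
  qed
  obtain es vs where "is_cycle ep F es vs" using cycle_exists[OF finW WF Wne evW] by blast
  then show False using acyc unfolding acyclic_edges_def by blast
qed



theorem mainTheorem17:
  fixes V :: "'v set" and E :: "'e set" and F :: "'e set" and ep :: "'e \<Rightarrow> 'v \<times> 'v"
    and e :: 'e and a b :: 'v and eps :: real and \<Delta> :: nat and y :: "'e \<Rightarrow> bool"
  assumes eps: "0 < eps" "eps < 1/2"
    and Delta: "\<Delta> \<ge> 1"
    and finV: "finite V" and finE: "finite E"
    and ep_in: "\<forall>f \<in> insert e E. fst (ep f) \<in> V \<and> snd (ep f) \<in> V"
    and forest: "spanning_forest ep E F"
    and e_notin: "e \<notin> E" and e_ep: "ep e = (a, b)"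
    and same_tree: "fdist ep F a b < \<infinity>"
    and distinct_ends: "\<forall>f \<in> insert e E - F. fst (ep f) \<noteq> snd (ep f)"
    and disjoint_ends: "\<forall>f \<in> insert e E - F. \<forall>g \<in> insert e E - F.
                           f \<noteq> g \<longrightarrow> ends ep f \<inter> ends ep g = {}"
    and far: "\<forall>u \<in> (\<Union>f \<in> insert e E - F. ends ep f). \<forall>w \<in> (\<Union>f \<in> insert e E - F. ends ep f).
                 u \<noteq> w \<longrightarrow> fdist ep F u w \<ge> enat \<Delta>"
    and small: "(1 + (1 - 2*eps) ^ \<Delta>) ^ card (E - F) < 2"
    and pos: "Pr eps V (insert e E) (\<lambda>\<omega>. \<forall>f \<in> E. Yv ep \<omega> f = y f) > 0"
  shows "\<bar>cond_Pr eps V (insert e E) (\<lambda>\<omega>. Yv ep \<omega> e = False)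
                                     (\<lambda>\<omega>. \<forall>f \<in> E. Yv ep \<omega> f = y f) - 1/2\<bar>
         \<le> (1 - 2*eps) ^ (\<Delta> - 1) * (1 + (1 - 2*eps) ^ \<Delta>) ^ card (E - F)
             / (2 - (1 + (1 - 2*eps) ^ \<Delta>) ^ card (E - F))"
proof -
  define \<theta> where "\<theta> = 1 - 2*eps"
  define \<rho> where "\<rho> = \<theta> ^ \<Delta>"
  define A where "A = E - F"
  define q where "q = (1 + \<rho>) ^ card A"
  define E' where "E' = insert e E"
  define yy where "yy = y(e := False)"
  define \<phi> where "\<phi> = (\<lambda>S::'e set. S - F)"
  have FE: "F \<subseteq> E" and acyc: "acyclic_edges ep F" using forest unfolding spanning_forest_def by auto
  have finE': "finite E'" using finE unfolding E'_def by simp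
  have finA: "finite A" using finE unfolding A_def by simp
  have eA: "e \<notin> A" using e_notin unfolding A_def by simp
  have E'F: "E' - F = insert e A" using FE e_notin unfolding E'_def A_def by auto
  have th0: "0 < \<theta>" "\<theta> \<le> 1" using eps unfolding \<theta>_def by auto
  have rho0: "0 \<le> \<rho>" using th0 unfolding \<rho>_def by simp
  have ends_in: "\<forall>f\<in>S. fst (ep f) \<in> V \<and> snd (ep f) \<in> V" if "S \<subseteq> E'" for S
    using ep_in that unfolding E'_def by blast
  have evall: "\<forall>w. even (deg ep S w)" if "S \<in> Pow E'" "evS ep V S" for S
    using evS_all[OF that(2) ends_in] that(1) by blast
  have cb: "\<Delta> * card (\<phi> S) \<le> card S" if "S \<in> Pow E'" "evS ep V S" for S
    unfolding \<phi>_def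
    apply (rule card_bound[OF finE'])
    using that evall distinct_ends disjoint_ends far unfolding E'_def by auto
  have inj: "inj_on \<phi> {S\<in>Pow E'. evS ep V S}"
    unfolding inj_on_def \<phi>_def
  proof (intro ballI impI)
    fix S1 S2 assume S: "S1 \<in> {S\<in>Pow E'. evS ep V S}" "S2 \<in> {S\<in>Pow E'. evS ep V S}" "S1 - F = S2 - F"
    show "S1 = S2" using inj_minusF[OF finE' acyc _ _ evall evall S(3)] S by auto
  qed
  have pw: "\<theta> ^ card S \<le> \<rho> ^ card (\<phi> S)" if "S \<in> Pow E'" "evS ep V S" for S
  proof -
    have "\<theta> ^ card S \<le> \<theta> ^ (\<Delta> * card (\<phi> S))"
      by (rule power_decreasing[OF cb[OF that]]) (use th0 in auto)
    then show ?thesis unfolding \<rho>_def by (simp add: power_mult)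
  qed
  have ev0: "evS ep V {}" unfolding evS_def deg_def by simp
  define t where "t = (\<lambda>S. (1 - 2*eps) ^ card S * (\<Prod>f\<in>S. sg (yy f)))"
  have abst: "\<bar>t S\<bar> = \<theta> ^ card S" for S
    unfolding t_def \<theta>_def using th0 unfolding \<theta>_def by (simp add: abs_mult abs_prod_sg)
  define P0 where "P0 = {S\<in>Pow E. evS ep V S}"
  define P1 where "P1 = {S\<in>Pow E'. evS ep V S \<and> e \<in> S}"
  define KE where "KE = KK eps ep V E yy"
  define N where "N = sum t P1"
  have finP0: "finite P0" "finite P1" using finE finE' unfolding P0_def P1_def by auto
  have PB: "Pr eps V (insert e E) (\<lambda>\<omega>. \<forall>f \<in> E. Yv ep \<omega> f = y f) = (1/2) ^ card E * KK eps ep V E y"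
    by (rule Pr_formula[OF finV finE'[unfolded E'_def]]) (use ep_in in auto)
  have KEy: "KK eps ep V E y = KE"
    unfolding KE_def KK_def yy_def
    apply (rule sum.cong[OF refl])
    apply (rule arg_cong[where f="\<lambda>x. _ * x"])
    apply (rule prod.cong[OF refl])
    using e_notin by auto
  have ev_eq: "(\<lambda>\<omega>. Yv ep \<omega> e = False \<and> (\<forall>f \<in> E. Yv ep \<omega> f = y f)) = (\<lambda>\<omega>. \<forall>f\<in>E'. Yv ep \<omega> f = yy f)"
    unfolding E'_def yy_def using e_notin by (intro ext) auto
  have PAB: "Pr eps V (insert e E) (\<lambda>\<omega>. Yv ep \<omega> e = False \<and> (\<forall>f \<in> E. Yv ep \<omega> f = y f)) = (1/2) ^ card E' * KK eps ep V E' yy"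
    unfolding ev_eq
    by (rule Pr_formula[OF finV finE'[unfolded E'_def]]) (use ep_in in \<open>auto simp: E'_def\<close>)
  have split: "KK eps ep V E' yy = KE + N"
  proof -
    have "{S\<in>Pow E'. evS ep V S} = P0 \<union> P1" unfolding P0_def P1_def E'_def by auto
    moreover have "P0 \<inter> P1 = {}" unfolding P0_def P1_def using e_notin by auto
    ultimately have "KK eps ep V E' yy = sum t P0 + sum t P1"
      unfolding KK_def t_def[symmetric] using finP0 by (simp add: sum.union_disjoint)
    moreover have "KE = sum t P0" unfolding KE_def KK_def t_def P0_def by simp
    ultimately show ?thesis unfolding N_def by simp
  qed
  have cE': "card E' = card E + 1" unfolding E'_def using finE e_notin by simp
  have sumA: "(\<Sum>T\<in>Pow A. \<rho> ^ card T) = q" unfolding q_def by (rule sum_pow_card[OF finA])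
  have bound0: "(\<Sum>S\<in>P0 - {{}}. \<theta> ^ card S) \<le> q - 1"
  proof -
    have P0sub: "P0 \<subseteq> {S\<in>Pow E'. evS ep V S}" unfolding P0_def E'_def by auto
    have "(\<Sum>S\<in>P0 - {{}}. \<theta> ^ card S) \<le> (\<Sum>S\<in>P0 - {{}}. \<rho> ^ card (\<phi> S))"
      apply (rule sum_mono) using pw P0sub by auto
    also have "\<dots> = (\<Sum>T\<in>\<phi> ` (P0 - {{}}). \<rho> ^ card T)"
      apply (rule sum.reindex[symmetric, unfolded comp_def])
      using inj P0sub by (meson Diff_subset inj_on_subset subset_trans)
    also have "\<dots> \<le> (\<Sum>T\<in>Pow A - {{}}. \<rho> ^ card T)"
    proof (rule sum_mono2)
      show "finite (Pow A - {{}})" using finA by simp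
      show "\<phi> ` (P0 - {{}}) \<subseteq> Pow A - {{}}"
      proof
        fix T assume "T \<in> \<phi> ` (P0 - {{}})"
        then obtain S where S: "S \<in> P0" "S \<noteq> {}" "T = \<phi> S" by auto
        have "T \<subseteq> A" using S unfolding P0_def A_def \<phi>_def by auto
        moreover have "T \<noteq> {}"
        proof
          assume "T = {}"
          then have "\<phi> S = \<phi> {}" using S unfolding \<phi>_def by auto
          moreover have "S \<in> {S\<in>Pow E'. evS ep V S}" "{} \<in> {S\<in>Pow E'. evS ep V S}" using S P0sub ev0 by auto
          ultimately have "S = {}" using inj unfolding inj_on_def by blast
          then show False using S by simp
        qed
        ultimately show "T \<in> Pow A - {{}}" by auto
      qed
      show "\<And>x. x \<in> Pow A - {{}} - \<phi> ` (P0 - {{}}) \<Longrightarrow> 0 \<le> \<rho> ^ card x" using rho0 by simp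
    qed
    also have "\<dots> = q - 1"
      using sumA sum.remove[of "Pow A" "{}" "\<lambda>T. \<rho> ^ card T"] finA by simp
    finally show ?thesis .
  qed
  have bound1: "\<bar>N\<bar> \<le> \<rho> * q"
  proof -
    have P1sub: "P1 \<subseteq> {S\<in>Pow E'. evS ep V S}" unfolding P1_def by auto
    have "\<bar>N\<bar> \<le> (\<Sum>S\<in>P1. \<bar>t S\<bar>)" unfolding N_def by (rule sum_abs)
    also have "\<dots> = (\<Sum>S\<in>P1. \<theta> ^ card S)" by (simp add: abst)
    also have "\<dots> \<le> (\<Sum>S\<in>P1. \<rho> ^ card (\<phi> S))"
      apply (rule sum_mono) using pw P1sub by auto
    also have "\<dots> = (\<Sum>T\<in>\<phi> ` P1. \<rho> ^ card T)"
      apply (rule sum.reindex[symmetric, unfolded comp_def])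
      using inj P1sub by (meson inj_on_subset)
    also have "\<dots> \<le> (\<Sum>T\<in>{T\<in>Pow (insert e A). e \<in> T}. \<rho> ^ card T)"
    proof (rule sum_mono2)
      show "finite {T\<in>Pow (insert e A). e \<in> T}" using finA by simp
      show "\<phi> ` P1 \<subseteq> {T\<in>Pow (insert e A). e \<in> T}"
        using E'F FE e_notin unfolding P1_def \<phi>_def by auto
      show "\<And>x. x \<in> {T\<in>Pow (insert e A). e \<in> T} - \<phi> ` P1 \<Longrightarrow> 0 \<le> \<rho> ^ card x" using rho0 by simp
    qed
    also have "\<dots> = \<rho> * q" unfolding q_def by (rule sum_pow_card_ins[OF finA eA])
    finally show ?thesis .
  qed
  have KEb: "KE \<ge> 2 - q"
  proof -
    have "{} \<in> P0" unfolding P0_def using ev0 by simp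
    moreover have "KE = sum t P0" unfolding KE_def KK_def t_def P0_def by simp
    ultimately have "KE = t {} + (\<Sum>S\<in>P0 - {{}}. t S)"
      using sum.remove[OF finP0(1), of "{}" t] by simp
    moreover have "t {} = 1" unfolding t_def by simp
    moreover have "\<bar>\<Sum>S\<in>P0 - {{}}. t S\<bar> \<le> (\<Sum>S\<in>P0 - {{}}. \<theta> ^ card S)"
      using sum_abs[of t "P0 - {{}}"] by (simp add: abst)
    ultimately show ?thesis using bound0 by linarith
  qed
  have qlt: "q < 2" using small unfolding q_def \<rho>_def \<theta>_def A_def .
  have KEpos: "KE > 0" using KEb qlt by linarith
  have cond: "cond_Pr eps V (insert e E) (\<lambda>\<omega>. Yv ep \<omega> e = False) (\<lambda>\<omega>. \<forall>f\<in>E. Yv ep \<omega> f = y f) - 1/2 = N / (2 * KE)"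
  proof -
    define c :: real where "c = (1/2) ^ card E"
    have c0: "c > 0" unfolding c_def by simp
    have "(1/2::real) ^ (card E + 1) = c / 2" unfolding c_def by simp
    then have "cond_Pr eps V (insert e E) (\<lambda>\<omega>. Yv ep \<omega> e = False) (\<lambda>\<omega>. \<forall>f\<in>E. Yv ep \<omega> f = y f)
        = (c / 2 * (KE + N)) / (c * KE)"
      unfolding cond_Pr_def PAB PB KEy split cE' c_def by simp
    also have "\<dots> = (KE + N) / (2 * KE)" using c0 by simp
    also have "\<dots> = 1/2 + N / (2 * KE)" using KEpos by (simp add: add_divide_distrib)
    finally show ?thesis by simp
  qed
  have "\<bar>N / (2 * KE)\<bar> = \<bar>N\<bar> / (2 * KE)" using KEpos by simp
  also have "\<dots> \<le> (\<rho> * q) / (2 * (2 - q))"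
    apply (rule frac_le) using bound1 KEb qlt by auto
  also have "\<dots> \<le> \<theta> ^ (\<Delta> - 1) * q / (2 - q)"
  proof -
    have D1: "\<Delta> = Suc (\<Delta> - 1)" using Delta by simp
    have "\<rho> = \<theta> ^ (\<Delta> - 1) * \<theta>" unfolding \<rho>_def by (subst D1) (simp only: power_Suc2 diff_Suc_1)
    then have "\<rho> \<le> \<theta> ^ (\<Delta> - 1)" using th0 by (simp add: mult_left_le)
    moreover have "q \<ge> 0" unfolding q_def using rho0 by simp
    ultimately have m: "\<rho> * q \<le> \<theta> ^ (\<Delta> - 1) * q" by (rule mult_right_mono)
    have "0 \<le> \<rho> * q" using rho0 \<open>q \<ge> 0\<close> by simp
    then have "\<rho> * q / 2 \<le> \<theta> ^ (\<Delta> - 1) * q" using m by linarith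
    then have h: "\<rho> * q / 2 \<le> \<theta> ^ (\<Delta> - 1) * q" .
    have "\<rho> * q / (2 * (2 - q)) = (\<rho> * q / 2) / (2 - q)" by (simp add: divide_divide_eq_left)
    also have "\<dots> \<le> \<theta> ^ (\<Delta> - 1) * q / (2 - q)"
      by (rule divide_right_mono[OF h]) (use qlt in simp)
    finally show ?thesis .
  qed
  finally show ?thesis unfolding cond q_def \<rho>_def \<theta>_def A_def .
qed


end
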